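(* Let $d\ge2$, $\varepsilon\in(0,1)$, $c\in\{1,2,\dots\}\cup\{\infty\}$, and let $W$ be the gap process of the $d$-ball SBBS. Fix $j\in\{1,\dots,d-1\}$ and let $x\in\mathbb Z^{d-1}_{\ge0}$ with $x_j=0$, $x_{j+1}\ge2$ (if $j+1\le d-1$) and $x_i\ge1$ for all $i\notin\{j,j+1\}$. Then $R_j:=\mathbb E[W_1-W_0\mid W_0=x]\in\mathbb R^{d-1}$ is given, with coordinates outside $\{1,\dots,d-1\}$ omitted and all unlisted coordinates equal to $0$, by: - if $c=1$: $(R_j)_j=\varepsilon(1-\varepsilon)$, $(R_j)_{j+1}=-\varepsilon(1-\varepsilon)$; - if $c\ge2$: $(R_j)_{j-1}=(1-\varepsilon)^2$, $(R_j)_j=\varepsilon(1-\varepsilon)$, $(R_j)_{j+1}=-(1-\varepsilon)$. In particular the $(d-1)\times(d-1)$ matrix $[R_1,\dots,R_{d-1}]$ equals $(1-\varepsilon)\hat R^{\varepsilon,c}$.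
   Context: Stochastic box-ball system (SBBS). Fix an error probability $\varepsilon\in[0,1]$ and a capacity $c\in\{1,2,\dots\}\cup\{\infty\}$. A configuration is $\zeta\in\{0,1\}^{\mathbb N}$, $\mathbb N=\{1,2,\dots\}$, with finitely many $1$'s (balls). Given $\zeta$, the stochastic carrier process $\Gamma$ is defined by $\Gamma(0)=0$ and recursively (with fresh independent randomness at each $k$): $\Gamma(k)=\Gamma(k-1)+1$ with probability $1-\varepsilon$ (and $\Gamma(k)=\Gamma(k-1)$ otherwise) if $\zeta(k)=1$ and $\Gamma(k-1)<c$; $\Gamma(k)=\Gamma(k-1)-1$ if $\zeta(k)=0$ and $\Gamma(k-1)\ge1$; $\Gamma(k)=\Gamma(k-1)$ otherwise. The new configuration is $\zeta'(k)=\mathbf 1(\Gamma(k)-\Gamma(k-1)=-1)+\mathbf 1(\Gamma(k)=\Gamma(k-1),\ \zeta(k)=1)$. Iterating independently gives the SBBS trajectory. With $d$ balls at positions $\zeta^{(1)}_t<\dots<\zeta^{(d)}_t$, the gap process is $W_t=(W^1_t,\dots,W^{d-1}_t)$, $W^i_t=\zeta^{(i+1)}_t-\zeta^{(i)}_t-1$, a time-homogeneous Markov chain on $\mathbb Z^{d-1}_{\ge0}$. $\mathrm{tridiag}_r(a,b,c)$ is the $r\times r$ tridiagonal matrix with diagonal $b$, subdiagonal $a$, superdiagonal $c$; $R_{\mathrm{PT}}=\mathrm{tridiag}_{d-1}(-1,1,0)$; $\hat R^{\varepsilon,c}=\varepsilon R_{\mathrm{PT}}$ if $c=1$ and $\hat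 R^{\varepsilon,c}=\mathrm{tridiag}_{d-1}(-1,\varepsilon,1-\varepsilon)$ if $c\ge2$. *)

theory Defs
  imports "HOL-Probability.Probability" "HOL-Library.Extended_Nat"
begin

text \<open>Configurations: finite sets of occupied sites in {1,2,...} (0 is never occupied).
  Capacity c :: enat, with \<infinity> standing for infinite capacity.
  The carrier state is (Gamma(k), set of sites k' \<le> k with zeta'(k') = 1).\<close>

definition sbbs_carrier_step ::
  "real \<Rightarrow> enat \<Rightarrow> nat set \<Rightarrow> nat \<Rightarrow> nat \<times> nat set \<Rightarrow> (nat \<times> nat set) pmf" where
  "sbbs_carrier_step \<epsilon> c \<zeta> k st =
     (case st of (g, S) \<Rightarrow>
       if k \<in> \<zeta> \<and> enat g < c then
         map_pmf (\<lambda>b. if b then (g + 1, S) else (g, insert k S)) (bernoulli_pmf (1 - \<epsilon>))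
       else if k \<notin> \<zeta> \<and> g \<ge> 1 then return_pmf (g - 1, insert k S)
       else if k \<in> \<zeta> then return_pmf (g, insert k S)
       else return_pmf (g, S))"

fun sbbs_run :: "real \<Rightarrow> enat \<Rightarrow> nat set \<Rightarrow> nat \<Rightarrow> (nat \<times> nat set) pmf" where
  "sbbs_run \<epsilon> c \<zeta> 0 = return_pmf (0, {})"
| "sbbs_run \<epsilon> c \<zeta> (Suc k) = bind_pmf (sbbs_run \<epsilon> c \<zeta> k) (sbbs_carrier_step \<epsilon> c \<zeta> (Suc k))"

text \<open>One SBBS update. Beyond site Max zeta + card zeta the carrier is empty and zeta is 0,
  so no further balls are produced; hence scanning up to that site gives the full zeta'.\<close>
definition sbbs_step :: "real \<Rightarrow> enat \<Rightarrow> nat set \<Rightarrow> nat set pmf" where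
  "sbbs_step \<epsilon> c \<zeta> = map_pmf snd (sbbs_run \<epsilon> c \<zeta> (Max \<zeta> + card \<zeta> + 1))"

definition ball_pos :: "nat set \<Rightarrow> nat \<Rightarrow> nat" where
  "ball_pos \<zeta> i = sorted_list_of_set \<zeta> ! (i - 1)"

definition gap :: "nat set \<Rightarrow> nat \<Rightarrow> nat" where
  "gap \<zeta> i = ball_pos \<zeta> (Suc i) - ball_pos \<zeta> i - 1"

definition gap_drift :: "real \<Rightarrow> enat \<Rightarrow> nat set \<Rightarrow> nat \<Rightarrow> real" where
  "gap_drift \<epsilon> c \<zeta> i =
     measure_pmf.expectation (sbbs_step \<epsilon> c \<zeta>) (\<lambda>\<zeta>'. real (gap \<zeta>' i) - real (gap \<zeta> i))"

definition tridiag :: "nat \<Rightarrow> real \<Rightarrow> real \<Rightarrow> real \<Rightarrow> nat \<Rightarrow> nat \<Rightarrow> real" where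
  "tridiag r a b c i j =
     (if i < 1 \<or> i > r \<or> j < 1 \<or> j > r then 0
      else if i = j then b else if i = j + 1 then a else if j = i + 1 then c else 0)"

definition R_PT :: "nat \<Rightarrow> nat \<Rightarrow> nat \<Rightarrow> real" where
  "R_PT d = tridiag (d - 1) (-1) 1 0"

definition R_hat :: "real \<Rightarrow> enat \<Rightarrow> nat \<Rightarrow> nat \<Rightarrow> nat \<Rightarrow> real" where
  "R_hat \<epsilon> c d i j =
     (if c = 1 then \<epsilon> * R_PT d i j else tridiag (d - 1) (-1) \<epsilon> (1 - \<epsilon>) i j)"

definition R_col :: "real \<Rightarrow> enat \<Rightarrow> nat \<Rightarrow> nat \<Rightarrow> real" where
  "R_col \<epsilon> c j i =
     (if c = 1 then
        (if i = j then \<epsilon> * (1 - \<epsilon>) else if i = j + 1 then - (\<epsilon> * (1 - \<epsilon>)) else 0)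
      else
        (if i + 1 = j then (1 - \<epsilon>)^2 else if i = j then \<epsilon> * (1 - \<epsilon>)
         else if i = j + 1 then - (1 - \<epsilon>) else 0))"

end

theory Submission imports Defs begin

lemma core:
  fixes A :: "nat set"
  assumes fin: "finite A" and k: "k < card A"
  shows "k < card {y\<in>A. y \<le> x} \<longleftrightarrow> sorted_list_of_set A ! k \<le> x"
proof -
  define s where "s = sorted_list_of_set A"
  have len: "length s = card A" and ds: "distinct s" and st: "set s = A"
    and ss: "sorted_wrt (<) s" using fin by (auto simp: s_def)
  have mono: "\<And>a b. a < b \<Longrightarrow> b < length s \<Longrightarrow> s!a < s!b"
    using ss by (simp add: sorted_wrt_nth_less)
  have mono2: "\<And>a b. a \<le> b \<Longrightarrow> b < length s \<Longrightarrow> s!a \<le> s!b"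
    using mono by (metis le_eq_less_or_eq)
  show ?thesis
  proof
    assume h: "k < card {y\<in>A. y \<le> x}"
    show "sorted_list_of_set A ! k \<le> x" unfolding s_def[symmetric]
    proof (rule ccontr)
      assume "\<not> s ! k \<le> x"
      have "{y\<in>A. y \<le> x} \<subseteq> (\<lambda>l. s!l) ` {..<k}"
      proof
        fix y assume y: "y \<in> {y\<in>A. y \<le> x}"
        then obtain l where l: "l < length s" "y = s!l" using st by (auto simp: in_set_conv_nth)
        have "l < k"
        proof (rule ccontr)
          assume "\<not> l < k"
          hence "s!k \<le> s!l" using mono2 l by simp
          thus False using y l \<open>\<not> s ! k \<le> x\<close> by simp
        qed
        thus "y \<in> (\<lambda>l. s!l) ` {..<k}" using l by auto
      qed
      hence "card {y\<in>A. y \<le> x} \<le> card ((\<lambda>l. s!l) ` {..<k})"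
        by (intro card_mono) auto
      also have "\<dots> \<le> k" using card_image_le[of "{..<k}" "\<lambda>l. s!l"] by simp
      finally show False using h by simp
    qed
  next
    assume h: "sorted_list_of_set A ! k \<le> x"
    have "(\<lambda>l. s!l) ` {..k} \<subseteq> {y\<in>A. y \<le> x}"
      using h mono2 len k st unfolding s_def[symmetric]
      by (auto intro: order.trans) 
    moreover have "card ((\<lambda>l. s!l) ` {..k}) = Suc k"
      using ds len k by (subst card_image) (auto simp: inj_on_def nth_eq_iff_index_eq)
    ultimately have "Suc k \<le> card {y\<in>A. y \<le> x}"
      by (metis (no_types, lifting) card_mono fin finite_subset mem_Collect_eq subsetI)
    thus "k < card {y\<in>A. y \<le> x}" by simp
  qed
qed

definition cnt :: "nat set \<Rightarrow> nat \<Rightarrow> nat" where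
  "cnt A x = card {y\<in>A. y \<le> x}"

lemma cnt_nth:
  fixes A :: "nat set"
  assumes fin: "finite A" and k: "k < card A"
  shows "cnt A (sorted_list_of_set A ! k) = Suc k"
proof -
  define s where "s = sorted_list_of_set A"
  have len: "length s = card A" and ss: "sorted_wrt (<) s" using fin by (auto simp: s_def)
  have a: "k < cnt A (s!k)" using core[OF fin k, of "s!k"] by (simp add: cnt_def s_def)
  have b: "cnt A (s!k) \<le> Suc k"
  proof (cases "Suc k < card A")
    case True
    have "s!k < s!Suc k" using ss len True by (simp add: sorted_wrt_nth_less)
    hence "\<not> Suc k < cnt A (s!k)" using core[OF fin True, of "s!k"] by (simp add: cnt_def s_def)
    thus ?thesis by simp
  next
    case False
    have "cnt A (s!k) \<le> card A" unfolding cnt_def using fin by (intro card_mono) auto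
    thus ?thesis using False k by simp
  qed
  show ?thesis using a b by (simp add: s_def)
qed

lemma nth_mem_set:
  fixes A :: "nat set"
  assumes fin: "finite A" and k: "k < card A"
  shows "sorted_list_of_set A ! k \<in> A"
  using fin k by (metis length_sorted_list_of_set nth_mem set_sorted_list_of_set)

lemma mem_rank:
  fixes A :: "nat set"
  assumes fin: "finite A" and x: "x \<in> A"
  shows "1 \<le> cnt A x \<and> cnt A x \<le> card A \<and> x = sorted_list_of_set A ! (cnt A x - 1)"
proof -
  obtain l where l: "l < card A" "x = sorted_list_of_set A ! l"
    using fin x by (metis in_set_conv_nth length_sorted_list_of_set set_sorted_list_of_set)
  have "cnt A x = Suc l" using cnt_nth[OF fin l(1)] l(2) by simp
  thus ?thesis using l by simp
qed

lemma cnt_mono: "finite A \<Longrightarrow> x \<le> y \<Longrightarrow> cnt A x \<le> cnt A y"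
  unfolding cnt_def by (intro card_mono) auto

lemma cnt_le_card: "finite A \<Longrightarrow> cnt A x \<le> card A"
  unfolding cnt_def by (intro card_mono) auto

lemma cnt_Suc: "cnt A (Suc x) = cnt A x + (if Suc x \<in> A then 1 else 0)" if "finite A"
proof -
  have e: "{y\<in>A. y \<le> Suc x} = (if Suc x \<in> A then insert (Suc x) {y\<in>A. y \<le> x} else {y\<in>A. y \<le> x})"
    using le_Suc_eq by auto
  show ?thesis unfolding cnt_def e using that by auto
qed

lemma gap_count:
  fixes A :: "nat set"
  assumes fin: "finite A" and sub: "A \<subseteq> {..N}" and i: "1 \<le> i" "i < card A"
  shows "gap A i = card {x\<in>{..N}. cnt A x = i} - 1"
proof -
  define s where "s = sorted_list_of_set A"
  have i1: "i - 1 < card A" using i by simp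
  have *: "cnt A x = i \<longleftrightarrow> s!(i-1) \<le> x \<and> x < s!i" for x
  proof -
    have a: "i - 1 < cnt A x \<longleftrightarrow> s!(i-1) \<le> x"
      using core[OF fin i1, of x] by (simp add: cnt_def s_def)
    have b: "i < cnt A x \<longleftrightarrow> s!i \<le> x"
      using core[OF fin i(2), of x] by (simp add: cnt_def s_def)
    have c: "cnt A x = i \<longleftrightarrow> (i - 1 < cnt A x \<and> \<not> i < cnt A x)" using i by linarith
    show ?thesis unfolding c a b by linarith
  qed
  have sN: "s!i \<le> N" using nth_mem_set[OF fin i(2)] sub by (auto simp: s_def)
  have "{x\<in>{..N}. cnt A x = i} = {s!(i-1)..<s!i}"
  proof (rule set_eqI)
    fix x show "x \<in> {x\<in>{..N}. cnt A x = i} \<longleftrightarrow> x \<in> {s!(i-1)..<s!i}"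
      unfolding * using sN by auto
  qed
  hence "card {x\<in>{..N}. cnt A x = i} = s!i - s!(i-1)" by simp
  moreover have "gap A i = s!i - s!(i-1) - 1"
    unfolding gap_def ball_pos_def s_def using i by simp
  ultimately show ?thesis by simp
qed


definition gstep :: "real \<Rightarrow> enat \<Rightarrow> nat set \<Rightarrow> nat \<Rightarrow> nat \<Rightarrow> nat pmf" where
  "gstep \<epsilon> c \<zeta> k g = (if k \<in> \<zeta> \<and> enat g < c then map_pmf (\<lambda>b. if b then g+1 else g) (bernoulli_pmf (1-\<epsilon>))
     else if k \<notin> \<zeta> \<and> g \<ge> 1 then return_pmf (g-1) else return_pmf g)"

definition GG :: "real \<Rightarrow> enat \<Rightarrow> nat set \<Rightarrow> nat \<Rightarrow> nat pmf" where
  "GG \<epsilon> c \<zeta> x = map_pmf fst (sbbs_run \<epsilon> c \<zeta> x)"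

lemma map_fst_step: "map_pmf fst (sbbs_carrier_step \<epsilon> c \<zeta> k st) = gstep \<epsilon> c \<zeta> k (fst st)"
proof (cases st)
  case (Pair g S)
  show ?thesis unfolding Pair sbbs_carrier_step_def gstep_def
    by (auto simp: map_pmf_comp intro!: map_pmf_cong)
qed

lemma GG_0: "GG \<epsilon> c \<zeta> 0 = return_pmf 0"
  by (simp add: GG_def)

lemma GG_Suc: "GG \<epsilon> c \<zeta> (Suc x) = bind_pmf (GG \<epsilon> c \<zeta> x) (gstep \<epsilon> c \<zeta> (Suc x))"
  unfolding GG_def by (simp add: map_bind_pmf bind_map_pmf map_fst_step)

lemma step_set:
  assumes "st' \<in> set_pmf (sbbs_carrier_step \<epsilon> c \<zeta> k (g, S))"
  shows "(k \<in> \<zeta> \<and> (st' = (g+1, S) \<or> st' = (g, insert k S)))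
       \<or> (k \<notin> \<zeta> \<and> g \<ge> 1 \<and> st' = (g-1, insert k S))
       \<or> (k \<notin> \<zeta> \<and> g = 0 \<and> st' = (g, S))"
  using assms by (auto simp: sbbs_carrier_step_def split: if_splits)

lemma run_inv:
  assumes fin: "finite \<zeta>" and z0: "0 \<notin> \<zeta>"
  shows "st \<in> set_pmf (sbbs_run \<epsilon> c \<zeta> x) \<Longrightarrow>
     finite (snd st) \<and> snd st \<subseteq> {..x} \<and> card (snd st) + fst st = cnt \<zeta> x"
proof (induction x arbitrary: st)
  case 0
  have "{y\<in>\<zeta>. y \<le> 0} = {}" using z0 by auto
  thus ?case using 0 by (simp add: cnt_def)
next
  case (Suc x)
  from Suc.prems obtain g S where gS: "(g,S) \<in> set_pmf (sbbs_run \<epsilon> c \<zeta> x)"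
    and st: "st \<in> set_pmf (sbbs_carrier_step \<epsilon> c \<zeta> (Suc x) (g, S))" by auto
  have IH: "finite S" "S \<subseteq> {..x}" "card S + g = cnt \<zeta> x" using Suc.IH[OF gS] by auto
  have nS: "Suc x \<notin> S" using IH(2) by auto
  have cs: "cnt \<zeta> (Suc x) = cnt \<zeta> x + (if Suc x \<in> \<zeta> then 1 else 0)" using cnt_Suc fin by blast
  show ?case using step_set[OF st] IH nS cs by auto
qed

lemma run_finite: "finite (set_pmf (sbbs_run \<epsilon> c \<zeta> x))"
proof (induction x)
  case 0 thus ?case by simp
next
  case (Suc x)
  have "finite (set_pmf (sbbs_carrier_step \<epsilon> c \<zeta> (Suc x) st))" for st
  proof -
    obtain g S where st: "st = (g, S)" by (cases st)
    have "set_pmf (sbbs_carrier_step \<epsilon> c \<zeta> (Suc x) st) \<subseteq>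
      {(g+1,S), (g, insert (Suc x) S), (g-1, insert (Suc x) S), (g,S)}"
      using step_set[of _ \<epsilon> c \<zeta> "Suc x" g S] st by blast
    thus ?thesis by (rule finite_subset) simp
  qed
  thus ?case using Suc by simp
qed

lemma run_restrict:
  assumes fin: "finite \<zeta>" and z0: "0 \<notin> \<zeta>" and xN: "x \<le> N"
  shows "map_pmf (\<lambda>st. {y\<in>snd st. y \<le> x}) (sbbs_run \<epsilon> c \<zeta> N) = map_pmf snd (sbbs_run \<epsilon> c \<zeta> x)"
  using xN
proof (induct N rule: dec_induct)
  case base
  show ?case
  proof (rule map_pmf_cong[OF refl])
    fix st assume "st \<in> set_pmf (sbbs_run \<epsilon> c \<zeta> x)"
    hence "snd st \<subseteq> {..x}" using run_inv[OF fin z0] by blast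
    thus "{y\<in>snd st. y \<le> x} = snd st" by auto
  qed
next
  case (step n)
  define f where "f = (\<lambda>st::nat \<times> nat set. {y\<in>snd st. y \<le> x})"
  have *: "map_pmf f (sbbs_carrier_step \<epsilon> c \<zeta> (Suc n) st) = return_pmf (f st)" for st
  proof -
    obtain g S where st: "st = (g, S)" by (cases st)
    have "map_pmf f (sbbs_carrier_step \<epsilon> c \<zeta> (Suc n) st) = map_pmf (\<lambda>_. f st) (sbbs_carrier_step \<epsilon> c \<zeta> (Suc n) st)"
    proof (rule map_pmf_cong[OF refl])
      fix st' assume "st' \<in> set_pmf (sbbs_carrier_step \<epsilon> c \<zeta> (Suc n) st)"
      thus "f st' = f st" using step_set[of st' \<epsilon> c \<zeta> "Suc n" g S] st step.hyps
        by (auto simp: f_def)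
    qed
    thus ?thesis by simp
  qed
  have "map_pmf f (sbbs_run \<epsilon> c \<zeta> (Suc n)) = bind_pmf (sbbs_run \<epsilon> c \<zeta> n) (\<lambda>st. return_pmf (f st))"
    by (simp add: map_bind_pmf *)
  also have "\<dots> = map_pmf f (sbbs_run \<epsilon> c \<zeta> n)" by (simp add: map_pmf_def)
  finally show ?case using step.hyps by (simp add: f_def)
qed


lemma prob_cnt:
  assumes fin: "finite \<zeta>" and z0: "0 \<notin> \<zeta>" and xN: "x \<le> N"
  shows "measure_pmf.prob (sbbs_run \<epsilon> c \<zeta> N) {st. cnt (snd st) x = i}
       = measure_pmf.prob (GG \<epsilon> c \<zeta> x) {g. g + i = cnt \<zeta> x}"
proof -
  have "measure_pmf.prob (sbbs_run \<epsilon> c \<zeta> N) {st. cnt (snd st) x = i}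
      = measure_pmf.prob (map_pmf (\<lambda>st. {y\<in>snd st. y \<le> x}) (sbbs_run \<epsilon> c \<zeta> N)) {T. card T = i}"
    by (simp add: cnt_def vimage_def)
  also have "\<dots> = measure_pmf.prob (map_pmf snd (sbbs_run \<epsilon> c \<zeta> x)) {T. card T = i}"
    using run_restrict[OF fin z0 xN] by simp
  also have "\<dots> = measure_pmf.prob (sbbs_run \<epsilon> c \<zeta> x) {st. card (snd st) = i}"
    by (simp add: vimage_def)
  also have "\<dots> = measure_pmf.prob (sbbs_run \<epsilon> c \<zeta> x) ({st. card (snd st) = i} \<inter> set_pmf (sbbs_run \<epsilon> c \<zeta> x))"
    by (simp add: measure_Int_set_pmf)
  also have "{st. card (snd st) = i} \<inter> set_pmf (sbbs_run \<epsilon> c \<zeta> x)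
      = {st. fst st + i = cnt \<zeta> x} \<inter> set_pmf (sbbs_run \<epsilon> c \<zeta> x)"
    using run_inv[OF fin z0, of _ \<epsilon> c x] by force
  also have "measure_pmf.prob (sbbs_run \<epsilon> c \<zeta> x) \<dots> = measure_pmf.prob (sbbs_run \<epsilon> c \<zeta> x) {st. fst st + i = cnt \<zeta> x}"
    by (simp add: measure_Int_set_pmf)
  also have "\<dots> = measure_pmf.prob (GG \<epsilon> c \<zeta> x) {g. g + i = cnt \<zeta> x}"
    by (simp add: GG_def vimage_def)
  finally show ?thesis .
qed

lemma integral_pmf_cong_fin:
  fixes f g :: "'a \<Rightarrow> real"
  assumes "finite (set_pmf M)" "\<And>x. x \<in> set_pmf M \<Longrightarrow> f x = g x"
  shows "measure_pmf.expectation M f = measure_pmf.expectation M g"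
  using assms by (simp add: integral_measure_pmf[of "set_pmf M"])

lemma gap_sum:
  fixes A :: "nat set"
  assumes fin: "finite A" and sub: "A \<subseteq> {..N}" and i: "1 \<le> i" "i < card A"
  shows "real (gap A i) = (\<Sum>x\<le>N. (if cnt A x = i then 1 else 0)) - 1"
proof -
  have i1: "i - 1 < card A" using i by simp
  have m: "sorted_list_of_set A ! (i-1) \<in> {x\<in>{..N}. cnt A x = i}"
    using cnt_nth[OF fin i1] nth_mem_set[OF fin i1] sub i by auto
  hence ne: "card {x\<in>{..N}. cnt A x = i} \<ge> 1"
  proof -
    have "finite {x\<in>{..N}. cnt A x = i}" by simp
    hence "card {x\<in>{..N}. cnt A x = i} \<noteq> 0" using m by auto
    thus ?thesis by linarith
  qed
  have "real (card {x\<in>{..N}. cnt A x = i}) = (\<Sum>x\<le>N. (if cnt A x = i then 1 else 0))"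
  proof -
    have "{x\<in>{..N}. cnt A x = i} = {..N} \<inter> {x. cnt A x = i}" by auto
    thus ?thesis by (simp add: sum.If_cases)
  qed
  thus ?thesis using gap_count[OF assms] ne by (simp add: of_nat_diff)
qed

lemma drift_formula:
  assumes fin: "finite \<zeta>" and z0: "0 \<notin> \<zeta>" and N: "N = Max \<zeta> + card \<zeta> + 1"
    and g0: "\<forall>st \<in> set_pmf (sbbs_run \<epsilon> c \<zeta> N). fst st = 0"
    and i: "1 \<le> i" "i < card \<zeta>"
  shows "gap_drift \<epsilon> c \<zeta> i = (\<Sum>x\<le>N. measure_pmf.prob (GG \<epsilon> c \<zeta> x) {g. g + i = cnt \<zeta> x}
             - (if cnt \<zeta> x = i then 1 else 0))"
proof -
  have subz: "\<zeta> \<subseteq> {..N}" using fin N by (auto dest: Max_ge)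
  have cN: "cnt \<zeta> N = card \<zeta>" unfolding cnt_def using subz
    by (metis (no_types, lifting) atMost_iff subset_iff Collect_mem_eq Collect_cong)
  let ?M = "sbbs_run \<epsilon> c \<zeta> N"
  have "gap_drift \<epsilon> c \<zeta> i = measure_pmf.expectation ?M (\<lambda>st. real (gap (snd st) i) - real (gap \<zeta> i))"
    unfolding gap_drift_def sbbs_step_def N by simp
  also have "\<dots> = measure_pmf.expectation ?M (\<lambda>st. \<Sum>x\<le>N. indicator {st. cnt (snd st) x = i} st
        - (if cnt \<zeta> x = i then 1 else 0))"
  proof (rule integral_pmf_cong_fin[OF run_finite])
    fix st assume st: "st \<in> set_pmf ?M"
    have inv: "finite (snd st)" "snd st \<subseteq> {..N}" "card (snd st) + fst st = cnt \<zeta> N"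
      using run_inv[OF fin z0 st] by auto
    have cs: "card (snd st) = card \<zeta>" using inv g0 st cN by auto
    have "real (gap (snd st) i) = (\<Sum>x\<le>N. (if cnt (snd st) x = i then 1 else 0)) - 1"
      using gap_sum[OF inv(1) inv(2) i(1)] i(2) cs by simp
    moreover have "real (gap \<zeta> i) = (\<Sum>x\<le>N. (if cnt \<zeta> x = i then 1 else 0)) - 1"
      using gap_sum[OF fin subz i] .
    moreover have "(\<Sum>x\<le>N. indicator {st. cnt (snd st) x = i} st - (if cnt \<zeta> x = i then 1 else 0))
      = (\<Sum>x\<le>N. (if cnt (snd st) x = i then 1 else 0)) - (\<Sum>x\<le>N. (if cnt \<zeta> x = i then 1 else (0::real)))"
      by (simp only: sum_subtractf indicator_def mem_Collect_eq of_bool_def)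
    ultimately show "real (gap (snd st) i) - real (gap \<zeta> i) = (\<Sum>x\<le>N. indicator {st. cnt (snd st) x = i} st
        - (if cnt \<zeta> x = i then 1 else 0))"
      by linarith
  qed
  also have "\<dots> = (\<Sum>x\<le>N. measure_pmf.expectation ?M (\<lambda>st. indicator {st. cnt (snd st) x = i} st
        - (if cnt \<zeta> x = i then 1 else (0::real))))"
    by (subst Bochner_Integration.integral_sum) (simp_all add: integrable_measure_pmf_finite[OF run_finite])
  also have "\<dots> = (\<Sum>x\<le>N. measure_pmf.prob (GG \<epsilon> c \<zeta> x) {g. g + i = cnt \<zeta> x}
             - (if cnt \<zeta> x = i then 1 else 0))"
  proof (rule sum.cong[OF refl])
    fix x assume x: "x \<in> {..N}"
    have "measure_pmf.expectation ?M (\<lambda>st. indicator {st. cnt (snd st) x = i} st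
        - (if cnt \<zeta> x = i then 1 else (0::real)))
       = measure_pmf.expectation ?M (indicator {st. cnt (snd st) x = i}) - (if cnt \<zeta> x = i then 1 else 0)"
      by (subst Bochner_Integration.integral_diff) (auto simp: integrable_measure_pmf_finite[OF run_finite])
    also have "\<dots> = measure_pmf.prob ?M {st. cnt (snd st) x = i} - (if cnt \<zeta> x = i then 1 else 0)"
      by simp
    also have "\<dots> = measure_pmf.prob (GG \<epsilon> c \<zeta> x) {g. g + i = cnt \<zeta> x} - (if cnt \<zeta> x = i then 1 else 0)"
      using prob_cnt[OF fin z0, of x N] x by simp
    finally show "measure_pmf.expectation ?M (\<lambda>st. indicator {st. cnt (snd st) x = i} st
        - (if cnt \<zeta> x = i then 1 else (0::real))) = \<dots>" .
  qed
  finally show ?thesis .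
qed


lemma prob_bind_bern:
  assumes "0 \<le> p" "p \<le> 1"
  shows "measure_pmf.prob (bind_pmf (bernoulli_pmf p) g) A
       = p * measure_pmf.prob (g True) A + (1 - p) * measure_pmf.prob (g False) A"
proof -
  have "emeasure (measure_pmf (bind_pmf (bernoulli_pmf p) g)) A = (\<integral>\<^sup>+x. emeasure (measure_pmf (g x)) A \<partial>bernoulli_pmf p)"
    by (rule emeasure_bind_pmf)
  also have "\<dots> = emeasure (measure_pmf (g True)) A * ennreal p + emeasure (measure_pmf (g False)) A * ennreal (1 - p)"
    by (rule nn_integral_bernoulli_pmf) (use assms in auto)
  also have "\<dots> = ennreal (measure_pmf.prob (g True) A * p + measure_pmf.prob (g False) A * (1 - p))"
    using assms by (simp add: measure_pmf.emeasure_eq_measure ennreal_mult ennreal_plus)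
  finally have "ennreal (measure_pmf.prob (bind_pmf (bernoulli_pmf p) g) A) = ennreal (measure_pmf.prob (g True) A * p + measure_pmf.prob (g False) A * (1 - p))"
    by (simp add: measure_pmf.emeasure_eq_measure)
  hence "measure_pmf.prob (bind_pmf (bernoulli_pmf p) g) A = measure_pmf.prob (g True) A * p + measure_pmf.prob (g False) A * (1 - p)"
    using assms by (subst (asm) ennreal_inj) auto
  thus ?thesis by (simp add: mult.commute)
qed

locale sbbs_setting =
  fixes \<epsilon> :: real and c :: enat and \<zeta> :: "nat set" and d j :: nat
  assumes d2: "d \<ge> 2" and e0: "0 < \<epsilon>" and e1: "\<epsilon> < 1" and c1: "c \<ge> 1"
    and j1: "1 \<le> j" and jd: "j \<le> d - 1"
    and fin: "finite \<zeta>" and cardz: "card \<zeta> = d" and z0: "0 \<notin> \<zeta>"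
    and gj: "gap \<zeta> j = 0"
    and gj1: "j + 1 \<le> d - 1 \<longrightarrow> gap \<zeta> (j + 1) \<ge> 2"
    and go: "\<forall>i \<in> {1..d-1} - {j, j + 1}. gap \<zeta> i \<ge> 1"
begin

definition "s = sorted_list_of_set \<zeta>"
definition "p = s ! (j - 1)"
definition "q = s ! j"

lemma gap_s: "1 \<le> k \<Longrightarrow> gap \<zeta> k = s!k - s!(k-1) - 1"
  unfolding gap_def ball_pos_def s_def by simp

lemma s_mono: "a < b \<Longrightarrow> b < d \<Longrightarrow> s!a < s!b"
  unfolding s_def using fin cardz by (simp add: sorted_wrt_nth_less)

lemma s_mono_rev: "s!a < s!b \<Longrightarrow> a < d \<Longrightarrow> b < d \<Longrightarrow> a < b"
  using s_mono by (metis less_asym linorder_neqE_nat)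

lemma s_mem: "k < d \<Longrightarrow> s!k \<in> \<zeta>"
  unfolding s_def using nth_mem_set[OF fin] cardz by simp

lemma s_cnt: "k < d \<Longrightarrow> cnt \<zeta> (s!k) = Suc k"
  unfolding s_def using cnt_nth[OF fin] cardz by simp

lemma mem_s: "x \<in> \<zeta> \<Longrightarrow> 1 \<le> cnt \<zeta> x \<and> cnt \<zeta> x \<le> d \<and> x = s ! (cnt \<zeta> x - 1)"
  unfolding s_def using mem_rank[OF fin] cardz by simp

lemma jd': "j < d" using jd d2 by simp

lemma q_eq: "q = Suc p"
proof -
  have "s!(j-1) < s!j" using s_mono[of "j-1" j] j1 jd' by simp
  moreover have "gap \<zeta> j = s!j - s!(j-1) - 1" using gap_s j1 by simp
  ultimately show ?thesis using gj unfolding p_def q_def by simp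
qed

lemma p_mem: "p \<in> \<zeta>" unfolding p_def using s_mem jd' by simp
lemma q_mem: "q \<in> \<zeta>" unfolding q_def using s_mem jd' by simp
lemma cnt_q: "cnt \<zeta> q = Suc j" unfolding q_def using s_cnt jd' by simp

lemma adjacent:
  assumes x: "x \<in> \<zeta>" and x1: "Suc x \<in> \<zeta>"
  shows "x = p"
proof -
  define l where "l = cnt \<zeta> x - 1"
  have l: "l < d" "x = s!l" using mem_s[OF x] unfolding l_def by auto
  define m where "m = cnt \<zeta> (Suc x) - 1"
  have m: "m < d" "Suc x = s!m" using mem_s[OF x1] unfolding m_def by auto
  have lm: "l < m" using s_mono_rev[of l m] l m by simp
  have l1: "Suc l < d" using lm m by simp
  have a: "s!(Suc l) \<le> s!m"
    using s_mono[of "Suc l" m] lm m by (cases "Suc l = m") auto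
  have b: "s!l < s!(Suc l)" using s_mono l1 by simp
  have e: "s!(Suc l) = Suc x" using a b l m by simp
  have g0: "gap \<zeta> (Suc l) = 0" using gap_s[of "Suc l"] e l by simp
  have "Suc l \<in> {1..d-1}" using l1 by auto
  hence "Suc l = j"
  proof -
    have "Suc l \<noteq> j + 1"
    proof
      assume "Suc l = j + 1"
      hence "j + 1 \<le> d - 1" using l1 by simp
      thus False using gj1 g0 \<open>Suc l = j + 1\<close> by simp
    qed
    moreover have "Suc l \<in> {j, j+1}"
    proof (rule ccontr)
      assume "Suc l \<notin> {j, j+1}"
      hence "gap \<zeta> (Suc l) \<ge> 1" using go \<open>Suc l \<in> {1..d-1}\<close> by blast
      thus False using g0 by simp
    qed
    ultimately show ?thesis by simp
  qed
  hence "l = j - 1" by simp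
  thus ?thesis using l unfolding p_def by simp
qed

lemma q1_notin: "Suc q \<notin> \<zeta>"
  using adjacent[OF q_mem] q_eq by auto

lemma q2_notin: "Suc (Suc q) \<notin> \<zeta>"
proof
  assume h: "Suc (Suc q) \<in> \<zeta>"
  define m where "m = cnt \<zeta> (Suc (Suc q)) - 1"
  have m: "m < d" "Suc (Suc q) = s!m" using mem_s[OF h] unfolding m_def by auto
  have jm: "j < m" using s_mono_rev[of j m] m jd' unfolding q_def by simp
  have l1: "Suc j < d" using jm m by simp
  have a: "s!(Suc j) \<le> Suc (Suc q)"
    using s_mono[of "Suc j" m] jm m by (cases "Suc j = m") auto
  have b: "q < s!(Suc j)" using s_mono l1 unfolding q_def by simp
  have c: "s!(Suc j) \<noteq> Suc q" using s_mem[OF l1] q1_notin by auto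
  have e: "s!(Suc j) = Suc (Suc q)" using a b c by simp
  have "gap \<zeta> (Suc j) = 1" using gap_s[of "Suc j"] e unfolding q_def by simp
  moreover have "j + 1 \<le> d - 1" using l1 by simp
  ultimately show False using gj1 by simp
qed

definition B1 :: "nat pmf" where "B1 = map_pmf (\<lambda>b. if b then 1 else 0) (bernoulli_pmf (1-\<epsilon>))"

definition "L x = (if x = q then bind_pmf B1 (gstep \<epsilon> c \<zeta> q)
   else if x = Suc q then map_pmf (\<lambda>g. g - 1) (bind_pmf B1 (gstep \<epsilon> c \<zeta> q))
   else if x \<in> \<zeta> then B1 else return_pmf 0)"

lemma gstep_notin: "k \<notin> \<zeta> \<Longrightarrow> gstep \<epsilon> c \<zeta> k g = return_pmf (g - 1)"
  unfolding gstep_def by auto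

lemma c0: "enat 0 < c" using c1 by (cases c) (auto simp: one_enat_def)

lemma gstep_in0: "k \<in> \<zeta> \<Longrightarrow> gstep \<epsilon> c \<zeta> k 0 = B1"
  unfolding gstep_def B1_def using c0 by (simp cong: if_cong)

lemma set_B1: "set_pmf B1 \<subseteq> {0, 1}"
  unfolding B1_def by auto

lemma set_gstep_in: "k \<in> \<zeta> \<Longrightarrow> set_pmf (gstep \<epsilon> c \<zeta> k g) \<subseteq> {g, Suc g}"
  unfolding gstep_def by auto

lemma set_Lq: "set_pmf (bind_pmf B1 (gstep \<epsilon> c \<zeta> q)) \<subseteq> {0, 1, 2}"
proof -
  have "set_pmf (gstep \<epsilon> c \<zeta> q g) \<subseteq> {0,1,2}" if "g \<in> {0,1}" for g :: nat
    using set_gstep_in[OF q_mem, of g] that by auto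
  thus ?thesis using set_B1 by auto
qed

lemma set_L_small: "x \<noteq> q \<Longrightarrow> set_pmf (L x) \<subseteq> {0, 1}"
proof -
  assume "x \<noteq> q"
  have "set_pmf (map_pmf (\<lambda>g. g - 1) (bind_pmf B1 (gstep \<epsilon> c \<zeta> q))) \<subseteq> {0,1}"
    using set_Lq by auto
  thus ?thesis using \<open>x \<noteq> q\<close> set_B1 unfolding L_def by auto
qed

lemma GG_law: "GG \<epsilon> c \<zeta> x = L x"
proof (induction x)
  case 0
  have "0 < q" using q_mem z0 by (cases q) auto
  thus ?case using z0 by (simp add: GG_0 L_def)
next
  case (Suc x)
  have G: "GG \<epsilon> c \<zeta> (Suc x) = bind_pmf (L x) (gstep \<epsilon> c \<zeta> (Suc x))"
    using Suc by (simp add: GG_Suc)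
  show ?case
  proof (cases "Suc x = q")
    case True
    hence x: "x = p" using q_eq by simp
    have "p \<noteq> q" "p \<noteq> Suc q" using q_eq by auto
    hence "L x = B1" using x p_mem unfolding L_def by simp
    thus ?thesis using G True by (simp add: L_def)
  next
    case nq: False
    show ?thesis
    proof (cases "Suc x = Suc q")
      case True
      hence "x = q" by simp
      have "gstep \<epsilon> c \<zeta> (Suc q) = (\<lambda>g. return_pmf (g - 1))"
        using gstep_notin[OF q1_notin] by auto
      thus ?thesis using G \<open>x = q\<close>
        by (simp add: L_def map_pmf_def)
    next
      case nq1: False
      show ?thesis
      proof (cases "Suc x \<in> \<zeta>")
        case True
        have "x \<notin> \<zeta>" using adjacent[of x] True nq q_eq by auto
        moreover have "x \<noteq> q" using nq1 by simp
        moreover have "x \<noteq> Suc q" using True q2_notin by auto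
        ultimately have "L x = return_pmf 0" unfolding L_def by simp
        hence "GG \<epsilon> c \<zeta> (Suc x) = B1" using G gstep_in0[OF True] by (simp add: bind_return_pmf)
        thus ?thesis using True nq nq1 by (simp add: L_def)
      next
        case False
        have xq: "x \<noteq> q" using nq1 by simp
        have "bind_pmf (L x) (gstep \<epsilon> c \<zeta> (Suc x)) = map_pmf (\<lambda>g. g - 1) (L x)"
        proof -
          have "gstep \<epsilon> c \<zeta> (Suc x) = (\<lambda>g. return_pmf (g - 1))"
            using gstep_notin[OF False] by auto
          thus ?thesis by (simp add: map_pmf_def)
        qed
        also have "\<dots> = map_pmf (\<lambda>_. 0) (L x)"
        proof (rule map_pmf_cong[OF refl])
          fix g assume "g \<in> set_pmf (L x)"
          thus "g - 1 = 0" using set_L_small[OF xq] by auto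
        qed
        finally show ?thesis using G False nq nq1 by (simp add: L_def)
      qed
    qed
  qed
qed

lemma prob_map_bern:
  "measure_pmf.prob (map_pmf f (bernoulli_pmf (1-\<epsilon>))) A
     = (1-\<epsilon>) * (if f True \<in> A then 1 else 0) + \<epsilon> * (if f False \<in> A then 1 else 0)"
  unfolding map_pmf_def using e0 e1 by (subst prob_bind_bern) auto

lemma prob_B1: "measure_pmf.prob B1 A = (1-\<epsilon>) * (if 1 \<in> A then 1 else 0) + \<epsilon> * (if 0 \<in> A then 1 else 0)"
  unfolding B1_def prob_map_bern by simp

lemma c_ne1: "c \<noteq> 1 \<Longrightarrow> enat 1 < c"
proof -
  assume "c \<noteq> 1"
  hence "(1::enat) < c" using c1 by (simp add: order_less_le)
  thus ?thesis by (simp add: one_enat_def)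
qed

lemma prob_gq1: "measure_pmf.prob (gstep \<epsilon> c \<zeta> q 1) A =
   (if c = 1 then (if 1 \<in> A then 1 else 0)
    else (1-\<epsilon>) * (if 2 \<in> A then 1 else 0) + \<epsilon> * (if 1 \<in> A then 1 else 0))"
proof (cases "c = 1")
  case True
  hence "gstep \<epsilon> c \<zeta> q 1 = return_pmf 1" unfolding gstep_def using q_mem by (simp add: one_enat_def)
  thus ?thesis using True by (simp add: indicator_def)
next
  case False
  hence "gstep \<epsilon> c \<zeta> q 1 = map_pmf (\<lambda>b. if b then 2 else 1) (bernoulli_pmf (1-\<epsilon>))"
    unfolding gstep_def using q_mem c_ne1 by (simp add: numeral_2_eq_2 cong: if_cong)
  thus ?thesis using False by (simp only: prob_map_bern) simp
qed

lemma prob_Lq: "measure_pmf.prob (bind_pmf B1 (gstep \<epsilon> c \<zeta> q)) A =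
   (1-\<epsilon>) * measure_pmf.prob (gstep \<epsilon> c \<zeta> q 1) A + \<epsilon> * measure_pmf.prob B1 A"
proof -
  have "bind_pmf B1 (gstep \<epsilon> c \<zeta> q) = bind_pmf (bernoulli_pmf (1-\<epsilon>)) (\<lambda>b. gstep \<epsilon> c \<zeta> q (if b then 1 else 0))"
    unfolding B1_def by (simp add: bind_map_pmf)
  hence "measure_pmf.prob (bind_pmf B1 (gstep \<epsilon> c \<zeta> q)) A =
    (1-\<epsilon>) * measure_pmf.prob (gstep \<epsilon> c \<zeta> q 1) A + (1 - (1-\<epsilon>)) * measure_pmf.prob (gstep \<epsilon> c \<zeta> q 0) A"
    using e0 e1 by (simp add: prob_bind_bern)
  thus ?thesis using gstep_in0[OF q_mem] by simp
qed

lemma count_one: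
  assumes "1 \<le> m" "m \<le> d"
  shows "(\<Sum>x\<in>\<zeta>. if cnt \<zeta> x = m then 1 else (0::real)) = 1"
proof -
  have "{x\<in>\<zeta>. cnt \<zeta> x = m} = {s!(m-1)}"
  proof (rule set_eqI)
    fix x
    show "x \<in> {x\<in>\<zeta>. cnt \<zeta> x = m} \<longleftrightarrow> x \<in> {s!(m-1)}"
      using mem_s[of x] s_mem[of "m-1"] s_cnt[of "m-1"] assms by auto
  qed
  hence "card {x\<in>\<zeta>. cnt \<zeta> x = m} = 1" by simp
  moreover have "(\<Sum>x\<in>\<zeta>. if cnt \<zeta> x = m then 1 else (0::real)) = real (card {x\<in>\<zeta>. cnt \<zeta> x = m})"
    using fin by (simp add: sum.inter_filter[symmetric])
  ultimately show ?thesis by simp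
qed

lemma drift_main:
  assumes i: "1 \<le> i" "i \<le> d - 1"
  shows "gap_drift \<epsilon> c \<zeta> i = R_col \<epsilon> c j i"
proof -
  define N where "N = Max \<zeta> + card \<zeta> + 1"
  have qM: "q \<le> Max \<zeta>" using q_mem fin by simp
  have Nq: "q < N" "Suc q < N" using qM d2 cardz unfolding N_def by auto
  have Nz: "N \<notin> \<zeta>" using fin unfolding N_def by (auto dest: Max_ge)
  have subz: "\<zeta> \<subseteq> {..N}" using fin unfolding N_def by (auto dest: Max_ge)
  have LN: "L N = return_pmf 0" using Nq Nz unfolding L_def by simp
  have g0: "\<forall>st \<in> set_pmf (sbbs_run \<epsilon> c \<zeta> N). fst st = 0"
  proof
    fix st assume "st \<in> set_pmf (sbbs_run \<epsilon> c \<zeta> N)"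
    hence "fst st \<in> set_pmf (GG \<epsilon> c \<zeta> N)" unfolding GG_def by simp
    thus "fst st = 0" using GG_law LN by simp
  qed
  have id: "i < card \<zeta>" using i cardz d2 by simp
  define ind :: "bool \<Rightarrow> real" where "ind b = (if b then 1 else 0)" for b
  define Hq where "Hq = (1-\<epsilon>) * (if c = 1 then ind (1 + i = Suc j)
           else (1-\<epsilon>) * ind (2 + i = Suc j) + \<epsilon> * ind (1 + i = Suc j))
        + \<epsilon> * ((1-\<epsilon>) * ind (1 + i = Suc j) + \<epsilon> * ind (i = Suc j)) - ind (Suc j = i)"
  define Hq1 where "Hq1 = (1-\<epsilon>) * (if c = 1 then ind (i = Suc j)
           else (1-\<epsilon>) * ind (1 + i = Suc j) + \<epsilon> * ind (i = Suc j))
        + \<epsilon> * ind (i = Suc j) - ind (Suc j = i)"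
  define F where "F x = (1-\<epsilon>) * (ind (cnt \<zeta> x = Suc i) - ind (cnt \<zeta> x = i))" for x
  have cq1: "cnt \<zeta> (Suc q) = Suc j" using cnt_Suc[OF fin, of q] cnt_q q1_notin by simp
  have pt: "measure_pmf.prob (GG \<epsilon> c \<zeta> x) {g. g + i = cnt \<zeta> x} - (if cnt \<zeta> x = i then 1 else 0)
      = (if x \<in> \<zeta> \<and> x \<noteq> q then F x else 0) + (if x = q then Hq else 0) + (if x = Suc q then Hq1 else 0)"
    for x
  proof -
    have "x = q \<or> x = Suc q \<or> (x \<noteq> q \<and> x \<noteq> Suc q \<and> x \<in> \<zeta>) \<or> (x \<noteq> q \<and> x \<noteq> Suc q \<and> x \<notin> \<zeta>)"
      by blast
    moreover
    { assume x: "x = q"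
      have G: "GG \<epsilon> c \<zeta> x = bind_pmf B1 (gstep \<epsilon> c \<zeta> q)" by (simp add: GG_law L_def x)
      have ?thesis unfolding G
        apply (simp only: prob_Lq prob_gq1 prob_B1)
        using cnt_q x by (simp add: Hq_def ind_def) }
    moreover
    { assume x: "x = Suc q"
      have G: "GG \<epsilon> c \<zeta> x = map_pmf (\<lambda>g. g - 1) (bind_pmf B1 (gstep \<epsilon> c \<zeta> q))" by (simp add: GG_law L_def x)
      have ?thesis unfolding G measure_map_pmf
        apply (simp only: prob_Lq prob_gq1 prob_B1)
        using cq1 x q1_notin by (simp add: Hq1_def ind_def) }
    moreover
    { assume x: "x \<noteq> q" "x \<noteq> Suc q" "x \<in> \<zeta>"
      have ?thesis unfolding GG_law L_def using x
        by (simp add: prob_B1 F_def ind_def algebra_simps) }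
    moreover
    { assume x: "x \<noteq> q" "x \<noteq> Suc q" "x \<notin> \<zeta>"
      have ?thesis unfolding GG_law L_def using x
        by (simp add: indicator_def) }
    ultimately show ?thesis by blast
  qed
  have "gap_drift \<epsilon> c \<zeta> i = (\<Sum>x\<le>N. measure_pmf.prob (GG \<epsilon> c \<zeta> x) {g. g + i = cnt \<zeta> x}
             - (if cnt \<zeta> x = i then 1 else 0))"
    using drift_formula[OF fin z0 N_def g0 i(1) id] .
  also have "\<dots> = (\<Sum>x\<le>N. (if x \<in> \<zeta> \<and> x \<noteq> q then F x else 0)) + Hq + Hq1"
    using Nq by (simp add: pt sum.distrib)
  also have "(\<Sum>x\<le>N. (if x \<in> \<zeta> \<and> x \<noteq> q then F x else 0)) = (\<Sum>x\<in>\<zeta> - {q}. F x)"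
  proof -
    have "{x\<in>{..N}. x \<in> \<zeta> \<and> x \<noteq> q} = \<zeta> - {q}" using subz by auto
    moreover have "(\<Sum>x\<le>N. (if x \<in> \<zeta> \<and> x \<noteq> q then F x else 0)) = sum F {x\<in>{..N}. x \<in> \<zeta> \<and> x \<noteq> q}"
      by (rule sum.inter_filter[symmetric]) simp
    ultimately show ?thesis by simp
  qed
  also have "(\<Sum>x\<in>\<zeta> - {q}. F x) = (1-\<epsilon>) * ((\<Sum>x\<in>\<zeta> - {q}. ind (cnt \<zeta> x = Suc i)) - (\<Sum>x\<in>\<zeta> - {q}. ind (cnt \<zeta> x = i)))"
    unfolding F_def by (simp add: sum_distrib_left sum_subtractf right_diff_distrib)
  also have "(\<Sum>x\<in>\<zeta> - {q}. ind (cnt \<zeta> x = Suc i)) = 1 - ind (Suc j = Suc i)"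
    using count_one[of "Suc i"] i d2 fin q_mem cnt_q by (simp add: sum_diff1 ind_def)
  also have "(\<Sum>x\<in>\<zeta> - {q}. ind (cnt \<zeta> x = i)) = 1 - ind (Suc j = i)"
    using count_one[of i] i d2 fin q_mem cnt_q by (simp add: sum_diff1 ind_def)
  finally have D: "gap_drift \<epsilon> c \<zeta> i = (1 - \<epsilon>) * (1 - ind (Suc j = Suc i) - (1 - ind (Suc j = i))) + Hq + Hq1" .
  show ?thesis
    unfolding D Hq_def Hq1_def R_col_def ind_def
    by (cases "c = 1"; cases "i + 1 = j"; cases "i = j"; cases "i = j + 1")
       (simp_all add: algebra_simps power2_eq_square)
qed

end


theorem proposition6p3:
  fixes d j :: nat and \<epsilon> :: real and c :: enat and \<zeta> :: "nat set"
  assumes "d \<ge> 2" and "0 < \<epsilon>" and "\<epsilon> < 1" and "c \<ge> 1"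
    and "1 \<le> j" and "j \<le> d - 1"
    and "finite \<zeta>" and "card \<zeta> = d" and "0 \<notin> \<zeta>"
    and "gap \<zeta> j = 0"
    and "j + 1 \<le> d - 1 \<longrightarrow> gap \<zeta> (j + 1) \<ge> 2"
    and "\<forall>i \<in> {1..d-1} - {j, j + 1}. gap \<zeta> i \<ge> 1"
  shows "(\<forall>i \<in> {1..d-1}. gap_drift \<epsilon> c \<zeta> i = R_col \<epsilon> c j i)
       \<and> (\<forall>i \<in> {1..d-1}. gap_drift \<epsilon> c \<zeta> i = (1 - \<epsilon>) * R_hat \<epsilon> c d i j)"
proof -
  interpret S: sbbs_setting \<epsilon> c \<zeta> d j
    using assms by unfold_locales auto
  have A: "\<forall>i \<in> {1..d-1}. gap_drift \<epsilon> c \<zeta> i = R_col \<epsilon> c j i"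
    using S.drift_main by auto
  have B: "R_col \<epsilon> c j i = (1 - \<epsilon>) * R_hat \<epsilon> c d i j" if i: "i \<in> {1..d-1}" for i
    using i assms(5,6)
    unfolding R_col_def R_hat_def R_PT_def tridiag_def
    by (cases "c = 1"; cases "i + 1 = j"; cases "i = j"; cases "i = j + 1")
       (simp_all add: algebra_simps power2_eq_square)
  show ?thesis using A B by auto
qed

end
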